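(* Let $n\ge 3$ and $s,t\in\{-1,1\}^{n}$ with $s\neq t$ and $\sharp_{n}(s)=\sharp_{n}(t)$. Assume $(s_1,s_2)=(1,-1)$ and $(t_1,t_2)=(-1,1)$. If \[ \sum_{k=1}^{n}s_{k}\sharp_{k}(s)>\sum_{k=1}^{n}t_{k}\sharp_{k}(t),\] then the curve $c_{s,t}$ meets $R=\{(x,y)\in(0,1)^2: x+y>1\}$, i.e. there is $(x,y)\in(0,1)^2$ with $x+y>1$ and \[ \sum_{k=1}^{n}\Big(s_{k}x^{\sharp_{k}(s)}y^{\tilde\sharp_{k}(s)}-t_{k}x^{\sharp_{k}(t)}y^{\tilde\sharp_{k}(t)}\Big)=0 .\]
   Context: For $r\in\{-1,1\}^{n}$ and $1\le k\le n$, $\sharp_{k}(r)$ is the number of entries of $(r_1,\dots,r_k)$ equal to $1$ and $\tilde\sharp_{k}(r)=k-\sharp_{k}(r)$. The curve $c_{s,t}$ is the zero set in $\mathbb{R}^2$ of $\sum_{k=1}^{n}(s_{k}x^{\sharp_{k}(s)}y^{\tilde\sharp_{k}(s)}-t_{k}x^{\sharp_{k}(t)}y^{\tilde\sharp_{k}(t)})$. *)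

theory Defs
  imports Complex_Main
begin

text \<open>Sign vectors r in {-1,1}^n are represented as functions nat => int,
  with entries r 1, ..., r n (1-based indexing); values outside 1..n are irrelevant.\<close>

definition sign_vec :: "nat \<Rightarrow> (nat \<Rightarrow> int) \<Rightarrow> bool" where
  "sign_vec n r \<longleftrightarrow> (\<forall>i\<in>{1..n}. r i = 1 \<or> r i = -1)"

definition sharp :: "nat \<Rightarrow> (nat \<Rightarrow> int) \<Rightarrow> nat" where
  "sharp k r = card {i \<in> {1..k}. r i = 1}"

definition tsharp :: "nat \<Rightarrow> (nat \<Rightarrow> int) \<Rightarrow> nat" where
  "tsharp k r = k - sharp k r"

definition curve_poly :: "nat \<Rightarrow> (nat \<Rightarrow> int) \<Rightarrow> (nat \<Rightarrow> int) \<Rightarrow> real \<Rightarrow> real \<Rightarrow> real" where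
  "curve_poly n s t x y =
     (\<Sum>k=1..n. of_int (s k) * x ^ sharp k s * y ^ tsharp k s
              - of_int (t k) * x ^ sharp k t * y ^ tsharp k t)"

definition curve :: "nat \<Rightarrow> (nat \<Rightarrow> int) \<Rightarrow> (nat \<Rightarrow> int) \<Rightarrow> (real \<times> real) set" where
  "curve n s t = {(x, y). curve_poly n s t x y = 0}"

end

theory Submission
  imports Defs
begin

lemma sharp_0: "sharp 0 r = 0" by (simp add: sharp_def)

lemma sharp_Suc: "sharp (Suc k) r = sharp k r + (if r (Suc k) = 1 then 1 else 0)"
proof -
  have e: "{i \<in> {1..Suc k}. r i = 1} = {i \<in> {1..k}. r i = 1} \<union> (if r (Suc k) = 1 then {Suc k} else {})"
    by (auto simp: le_Suc_eq)
  show ?thesis unfolding sharp_def e by (auto simp: card_insert_if)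
qed

lemma sharp_le: "sharp k r \<le> k"
  unfolding sharp_def by (rule order.trans[OF card_mono[of "{1..k}"]]) auto

lemma sum_sign: "sign_vec n r \<Longrightarrow> k \<le> n \<Longrightarrow> (\<Sum>i=1..k. r i) = 2 * int (sharp k r) - int k"
proof (induction k)
  case 0 then show ?case by (simp add: sharp_0)
next
  case (Suc k)
  have "r (Suc k) = 1 \<or> r (Suc k) = -1" using Suc.prems unfolding sign_vec_def by auto
  then show ?case using Suc by (auto simp: sharp_Suc)
qed

lemma sharp_first_neg: assumes "r 1 = -1" "k \<ge> 1" shows "sharp k r \<le> k - 1"
proof -
  have sub: "{i \<in> {1..k}. r i = 1} \<subseteq> {2..k}"
  proof
    fix i assume i: "i \<in> {i \<in> {1..k}. r i = 1}"
    then have "i \<noteq> 1" using assms(1) by force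
    with i show "i \<in> {2..k}" by simp
  qed
  have "sharp k r \<le> card {2..k}" unfolding sharp_def by (rule card_mono[OF _ sub]) simp
  then show ?thesis by simp
qed

lemma sharp_second_neg: assumes "r 2 = -1" "k \<ge> 2" shows "sharp k r \<le> k - 1"
proof -
  have sub: "{i \<in> {1..k}. r i = 1} \<subseteq> {1..k} - {2}"
  proof
    fix i assume i: "i \<in> {i \<in> {1..k}. r i = 1}"
    then have "i \<noteq> 2" using assms(1) by force
    with i show "i \<in> {1..k} - {2}" by simp
  qed
  have "sharp k r \<le> card ({1..k} - {2})" unfolding sharp_def by (rule card_mono[OF _ sub]) simp
  then show ?thesis using assms(2) by simp
qed

lemma cont_neg: fixes f :: "real \<Rightarrow> real" assumes "isCont f a" "f a < 0"
  shows "\<exists>d>0. \<forall>x. \<bar>x - a\<bar> < d \<longrightarrow> f x < 0"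
proof -
  from assms(1) have "f \<midarrow>a\<rightarrow> f a" by (simp add: isCont_def)
  then obtain d where d: "d > 0" "\<forall>x. x \<noteq> a \<and> norm (x - a) < d \<longrightarrow> norm (f x - f a) < - f a"
    unfolding LIM_eq using assms(2) by (meson neg_0_less_iff_less)
  show ?thesis
  proof (intro exI[of _ d] conjI allI impI)
    fix x assume x: "\<bar>x - a\<bar> < d"
    show "f x < 0"
    proof (cases "x = a")
      case True then show ?thesis using assms(2) by simp
    next
      case False then have "\<bar>f x - f a\<bar> < - f a" using d x by auto
      then show ?thesis by linarith
    qed
  qed (use d in auto)
qed

lemma convex_lt: fixes a b c t :: real assumes "a < c" "b < c" "0 \<le> t" "t \<le> 1"
  shows "(1 - t) * a + t * b < c"
proof -
  have "(1 - t) * a \<le> (1 - t) * c" using assms by (intro mult_left_mono) auto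
  moreover have "t * b \<le> t * c" using assms by (intro mult_left_mono) auto
  moreover have "(1 - t) * a < (1 - t) * c \<or> t * b < t * c" using assms
    by (cases "t = 1") auto
  ultimately show ?thesis by (auto simp: algebra_simps)
qed


lemma convex_gt: fixes a b c t :: real assumes "c < a" "c < b" "0 \<le> t" "t \<le> 1"
  shows "c < (1 - t) * a + t * b"
  using convex_lt[of "-a" "-c" "-b" t] assms by (simp add: algebra_simps)

theorem proposition3p1:
  fixes n :: nat and s t :: "nat \<Rightarrow> int"
  assumes "n \<ge> 3"
    and "sign_vec n s" and "sign_vec n t"
    and "\<exists>i\<in>{1..n}. s i \<noteq> t i"
    and "sharp n s = sharp n t"
    and "s 1 = 1" and "s 2 = -1" and "t 1 = -1" and "t 2 = 1"
    and "(\<Sum>k=1..n. s k * int (sharp k s)) > (\<Sum>k=1..n. t k * int (sharp k t))"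
  shows "\<exists>x y. 0 < x \<and> x < 1 \<and> 0 < y \<and> y < 1 \<and> x + y > 1 \<and> (x, y) \<in> curve n s t"
proof -
  define F where "F = curve_poly n s t"
  have s1: "sharp 1 s = 1" using assms(6) by (simp add: sharp_Suc[of 0, simplified] sharp_0)
  have t1: "sharp 1 t = 0" using assms(8) by (simp add: sharp_Suc[of 0, simplified] sharp_0)
  have F10: "F 1 0 = 1"
  proof -
    have z: "(\<Sum>k=2..n. of_int (s k) * 1 ^ sharp k s * (0::real) ^ tsharp k s
              - of_int (t k) * 1 ^ sharp k t * 0 ^ tsharp k t) = 0"
    proof (rule sum.neutral, rule ballI)
      fix k assume k: "k \<in> {2..n}"
      have "tsharp k s \<noteq> 0" using sharp_second_neg[of s k, OF assms(7)] k sharp_le[of k s]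
        by (auto simp: tsharp_def)
      moreover have "tsharp k t \<noteq> 0" using sharp_first_neg[of t k, OF assms(8)] k sharp_le[of k t]
        by (auto simp: tsharp_def)
      ultimately show "of_int (s k) * 1 ^ sharp k s * (0::real) ^ tsharp k s
              - of_int (t k) * 1 ^ sharp k t * 0 ^ tsharp k t = 0" by (simp add: zero_power)
    qed
    have "F 1 0 = (of_int (s 1) * 1 ^ sharp 1 s * (0::real) ^ tsharp 1 s
              - of_int (t 1) * 1 ^ sharp 1 t * 0 ^ tsharp 1 t) + (\<Sum>k=2..n. of_int (s k) * 1 ^ sharp k s * (0::real) ^ tsharp k s
              - of_int (t k) * 1 ^ sharp k t * 0 ^ tsharp k t)"
      unfolding F_def curve_poly_def using assms(1)
      by (subst sum.atLeast_Suc_atMost) (auto simp: numeral_2_eq_2)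
    also have "\<dots> = 1" using z s1 t1 assms(6,8) by (simp add: tsharp_def)
    finally show ?thesis .
  qed
  define G where "G x = F x 1" for x
  have G_eq: "G x = (\<Sum>k=1..n. of_int (s k) * x ^ sharp k s - of_int (t k) * x ^ sharp k t)" for x
    unfolding G_def F_def curve_poly_def by simp
  have G1: "G 1 = 0"
  proof -
    have "G 1 = of_int ((\<Sum>k=1..n. s k) - (\<Sum>k=1..n. t k))"
      unfolding G_eq by (simp add: sum_subtractf)
    also have "\<dots> = 0" using sum_sign[OF assms(2), of n] sum_sign[OF assms(3), of n] assms(5) by simp
    finally show ?thesis .
  qed
  define A where "A = (\<Sum>k=1..n. of_int (s k) * real (sharp k s) - of_int (t k) * real (sharp k t))"
  have Apos: "A > 0"
  proof -
    have "A = of_int ((\<Sum>k=1..n. s k * int (sharp k s)) - (\<Sum>k=1..n. t k * int (sharp k t)))"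
      unfolding A_def by (simp add: sum_subtractf)
    moreover have "0 < (\<Sum>k=1..n. s k * int (sharp k s)) - (\<Sum>k=1..n. t k * int (sharp k t))"
      using assms(10) by linarith
    ultimately show ?thesis by (simp only: of_int_0_less_iff)
  qed
  have dG: "DERIV G 1 :> A"
    unfolding G_eq[abs_def] A_def
    by (rule DERIV_sum) (auto intro!: derivative_eq_intros)
  obtain d where d: "d > 0" "\<forall>h>0. h < d \<longrightarrow> G (1 - h) < G 1"
    using DERIV_pos_inc_left[OF dG Apos] by blast
  define h where "h = min (d/2) (1/2)"
  define x0 where "x0 = 1 - h"
  have h: "0 < h" "h \<le> 1/2" "h < d" using d(1) unfolding h_def by (auto simp: min_def)
  have Gx0: "F x0 1 < 0" using d(2)[rule_format, of h] h G1 unfolding G_def x0_def by linarith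
  have c1: "isCont (\<lambda>y. F x0 y) 1" unfolding F_def curve_poly_def by (intro continuous_intros)
  obtain e1 where e1: "e1 > 0" "\<forall>y. \<bar>y - 1\<bar> < e1 \<longrightarrow> F x0 y < 0"
    using cont_neg[OF c1 Gx0] by blast
  define y1 where "y1 = 1 - min (e1/2) (h/2)"
  have y1b: "1 - h/2 \<le> y1" "y1 < 1" "1 - e1/2 \<le> y1" using e1(1) h(1) unfolding y1_def by (auto simp: min_def)
  have p: "0 < x0" "x0 < 1" "0 < y1" "y1 < 1" "x0 + y1 > 1" using h y1b unfolding x0_def by linarith+
  have p6: "F x0 y1 < 0" using e1(2)[rule_format, of y1] y1b e1(1) by linarith
  have c2: "isCont (\<lambda>y. - F 1 y) 0" unfolding F_def curve_poly_def by (intro continuous_intros)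
  have "- F 1 0 < 0" using F10 by simp
  then obtain e2 where e2: "e2 > 0" "\<forall>y. \<bar>y - 0\<bar> < e2 \<longrightarrow> - F 1 y < 0"
    using cont_neg[OF c2] by blast
  define y2 where "y2 = min (e2/2) (1/2)"
  have y2b: "0 < y2" "y2 \<le> 1/2" "y2 \<le> e2/2" using e2(1) unfolding y2_def by (auto simp: min_def)
  have y2: "0 < y2" "y2 < 1" using y2b by linarith+
  have y23: "F 1 y2 > 0" using e2(2)[rule_format, of y2] y2b e2(1) by linarith
  have c3: "isCont (\<lambda>x. - F x y2) 1" unfolding F_def curve_poly_def by (intro continuous_intros)
  have "- F 1 y2 < 0" using y23 by simp
  then obtain e3 where e3: "e3 > 0" "\<forall>x. \<bar>x - 1\<bar> < e3 \<longrightarrow> - F x y2 < 0"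
    using cont_neg[OF c3] by blast
  define x2 where "x2 = 1 - min (e3/2) (y2/2)"
  have x2b: "1 - y2/2 \<le> x2" "x2 < 1" "1 - e3/2 \<le> x2" using e3(1) y2b unfolding x2_def by (auto simp: min_def)
  have q: "0 < x2" "x2 < 1" "x2 + y2 > 1" using x2b y2b by linarith+
  have q4: "F x2 y2 > 0" using e3(2)[rule_format, of x2] x2b e3(1) by linarith
  define \<phi> where "\<phi> u = F ((1 - u) * x0 + u * x2) ((1 - u) * y1 + u * y2)" for u
  have "\<exists>u. 0 \<le> u \<and> u \<le> 1 \<and> \<phi> u = 0"
  proof (rule IVT)
    show "\<phi> 0 \<le> 0" using p6 unfolding \<phi>_def by simp
    show "0 \<le> \<phi> 1" using q4 unfolding \<phi>_def by simp
    show "\<forall>u. 0 \<le> u \<and> u \<le> 1 \<longrightarrow> isCont \<phi> u"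
      unfolding \<phi>_def F_def curve_poly_def by (intro allI impI continuous_intros)
  qed simp
  then obtain u where u: "0 \<le> u" "u \<le> 1" "\<phi> u = 0" by blast
  define x where "x = (1 - u) * x0 + u * x2"
  define y where "y = (1 - u) * y1 + u * y2"
  have "x < 1" unfolding x_def by (rule convex_lt[OF p(2) q(2) u(1) u(2)])
  moreover have "y < 1" unfolding y_def by (rule convex_lt[OF p(4) y2(2) u(1) u(2)])
  moreover have "0 < x" unfolding x_def by (rule convex_gt[OF p(1) q(1) u(1) u(2)])
  moreover have "0 < y" unfolding y_def by (rule convex_gt[OF p(3) y2(1) u(1) u(2)])
  moreover have "x + y > 1"
  proof -
    have "1 < (1 - u) * (x0 + y1) + u * (x2 + y2)" by (rule convex_gt[OF p(5) q(3) u(1) u(2)])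
    moreover have "x + y = (1 - u) * (x0 + y1) + u * (x2 + y2)" unfolding x_def y_def by (simp add: algebra_simps)
    ultimately show ?thesis by linarith
  qed
  moreover have "(x, y) \<in> curve n s t" using u(3) unfolding curve_def \<phi>_def F_def x_def[symmetric] y_def[symmetric] by simp
  ultimately show ?thesis by (intro exI conjI)
qed

end
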